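(* The canonical collection $\mathcal{S}$ consists of actively connected vertex sets and satisfies: (i) for every $S\in\mathcal{S}$, the tree $T_S$ connects the vertices in $S$; (ii) $\mathcal{S}$ is agreeable with respect to $y$.
   Context: Steiner Forest: finite undirected graph $G=(V,E)$ with non-negative edge costs $(c_e)_{e\in E}$ and a set $\mathcal{D}$ of demand pairs $\{a,b\}\subseteq V$ (partners); feasible solutions are $F\subseteq E$ with each demand pair in one connected component of $(V,F)$, of cost $c(F)=\sum_{e\in F}c_e$. $\mathrm{OPT}$ is a fixed optimal solution that is inclusionwise minimal (no cost-$0$ edge can be omitted keeping feasibility). For $U\subseteq V$, $\delta(U)$ is the set of edges with exactly one endpoint in $U$; $U$ separates $S$ if $S\cap U\ne\emptyset$ and $S\setminus U\ne\emptyset$. The $\varepsilon$-extended moat-growing algorithm (fixed $\varepsilon\ge0$): time $t$ increases continuously from $0$ at unit rate; it maintains tight edges $F$ (initially empty), duals $y_S(t)\ge0$ (initially $0$), and budgets of components (initially $0$). $\mathcal{C}^t$ is the family of vertex sets of connected components of $(V,F)$. A component is demand-active if it contains a vertex not connected in $(V,F)$ to some partner; budget-active if not demand-active but with positive budget; active if either; $\mathcal{A}^t$ is the set of active components. Each $y_S$, $S\in\mathcal{A}^t$, grows at unit rate; budgets of demand-active components grow at rate $\varepsilon$ and of budget-active ones decrease at rate $1$; an edge $e$ with $\sum_{S:e\in\delta(S)}y_S(t)=c_e$ becomes tight and is added to $F$; merging components add budgets. $y_S=y_S(\infty)$; $\mathcal{U}_{\mathrm{sep}}$ is the set of $U\in\mathrm{supp}(y)$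 separating some demand pair. The deactivation time $\tau_v$ of $v$ is the largest $t$ such that for all $s<t$, $v$ lies in a set of $\mathcal{A}^s$. Vertices $u,v$ are actively connected if for some $t$ they lie in a common set of $\mathcal{C}^t$ and $\tau_u,\tau_v\ge t$; this is an equivalence relation and a set is actively connected if contained in one equivalence class. A demand pair $\{a,b\}$ is satisfied by a vertex set $S$ if $\{a,b\}\subseteq S$, and by a collection if by some member. A collection $\mathcal{S}$ of vertex sets is agreeable (w.r.t. $y$) if (A1) every $S\in\mathcal{S}$ is a subset of the vertex set of some connected component of $\mathrm{OPT}$, with at most one $S\in\mathcal{S}$ per connected component of $\mathrm{OPT}$, and (A2) whenever two demand pairs are both separated by some $U\in\mathrm{supp}(y)$, either both or none of them are satisfied by $\mathcal{S}$. Canonical collection: start with a family $\mathcal{F}$ in which each tree (connected component) of $\mathrm{OPT}$ is its own forest; for each $U\in\mathcal{U}_{\mathrm{sep}}$, merge (take the union of vertex and edge sets of) all forests of $\mathcal{F}$ that connect some demand pair separated by $U$ into a single forest. For each $F\in\mathcal{F}$ let $r_F$ be a vertex of $F$ with maximum deactivation time; for each connected component $T$ of $F$, let $S$ be the set of vertices of $T$ actively connected to $r_F$; if $S\ne\emptyset$, add $S$ to $\mathcal{S}$ and let $T_S$ be the minimal subtree of $T$ connecting $S$. *)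

theory Defs
  imports "HOL-Analysis.Analysis"
begin

text \<open>Vertices: a finite type 'v (V = UNIV). Edges: a finite type 'e (E = UNIV),
  each edge e has the two-element endpoint set ends e (multigraphs allowed).\<close>

definition conn :: "('e \<Rightarrow> 'v set) \<Rightarrow> 'e set \<Rightarrow> 'v \<Rightarrow> 'v \<Rightarrow> bool" where
  "conn ends H u v \<longleftrightarrow> (u, v) \<in> {(a, b). \<exists>e\<in>H. ends e = {a, b}}\<^sup>*"

definition comps :: "('e \<Rightarrow> 'v set) \<Rightarrow> 'e set \<Rightarrow> 'v set set" where
  "comps ends H = {{w. conn ends H v w} | v. True}"

definition delta :: "('e \<Rightarrow> 'v set) \<Rightarrow> 'v set \<Rightarrow> 'e set" where
  "delta ends U = {e. ends e \<inter> U \<noteq> {} \<and> ends e - U \<noteq> {}}"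

definition separates :: "'v set \<Rightarrow> 'v set \<Rightarrow> bool" where
  "separates U S \<longleftrightarrow> S \<inter> U \<noteq> {} \<and> S - U \<noteq> {}"

definition feasible :: "('e \<Rightarrow> 'v set) \<Rightarrow> 'v set set \<Rightarrow> 'e set \<Rightarrow> bool" where
  "feasible ends D F \<longleftrightarrow> (\<forall>d\<in>D. \<exists>C\<in>comps ends F. d \<subseteq> C)"

definition cost :: "('e \<Rightarrow> real) \<Rightarrow> 'e set \<Rightarrow> real" where
  "cost c F = (\<Sum>e\<in>F. c e)"

definition is_min_opt :: "('e \<Rightarrow> 'v set) \<Rightarrow> ('e \<Rightarrow> real) \<Rightarrow> 'v set set \<Rightarrow> 'e set \<Rightarrow> bool" where
  "is_min_opt ends c D OPT \<longleftrightarrow> feasible ends D OPT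
     \<and> (\<forall>F. feasible ends D F \<longrightarrow> cost c OPT \<le> cost c F)
     \<and> (\<forall>F. F \<subset> OPT \<longrightarrow> \<not> feasible ends D F)"

text \<open>A run is described by A t (the family of active components at time t)
  and Ft t (the set of tight edges at time t), for t \<ge> 0.\<close>

definition dem_active :: "'v set set \<Rightarrow> 'v set \<Rightarrow> bool" where
  "dem_active D P \<longleftrightarrow> (\<exists>v\<in>P. \<exists>w. {v, w} \<in> D \<and> w \<notin> P)"

text \<open>y_Q(t): the dual of Q at time t = total time in [0,t) during which Q was active.\<close>
definition yt :: "(real \<Rightarrow> 'v set set) \<Rightarrow> 'v set \<Rightarrow> real \<Rightarrow> real" where
  "yt A Q t = measure lborel ({0..<t} \<inter> {s. Q \<in> A s})"

definition yfin :: "(real \<Rightarrow> 'v set set) \<Rightarrow> 'v set \<Rightarrow> real" where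
  "yfin A Q = measure lborel ({0..} \<inter> {s. Q \<in> A s})"

text \<open>Budget of a component P at time t: budgets of all earlier components contained in P
  (these are exactly the ones merged into P) add up; demand-active ones grew at rate eps
  while active, budget-active ones decreased at rate 1 while active.\<close>
definition budget :: "real \<Rightarrow> 'v set set \<Rightarrow> (real \<Rightarrow> 'v set set) \<Rightarrow> 'v set \<Rightarrow> real \<Rightarrow> real" where
  "budget eps D A P t =
     (\<Sum>Q\<in>{Q. Q \<subseteq> P}. if dem_active D Q then eps * yt A Q t else - yt A Q t)"

definition is_run :: "('e \<Rightarrow> 'v set) \<Rightarrow> ('e \<Rightarrow> real) \<Rightarrow> 'v set set \<Rightarrow> real
     \<Rightarrow> (real \<Rightarrow> 'v set set) \<Rightarrow> (real \<Rightarrow> 'e set) \<Rightarrow> bool" where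
  "is_run ends c D eps A Ft \<longleftrightarrow>
     (\<forall>Q. {s. Q \<in> A s} \<in> sets lborel)
   \<and> (\<forall>t\<ge>0. Ft t = {e. c e \<le> (\<Sum>Q\<in>{Q. e \<in> delta ends Q}. yt A Q t)})
   \<and> (\<forall>t\<ge>0. A t = {P \<in> comps ends (Ft t). dem_active D P \<or> 0 < budget eps D A P t})"

definition tau :: "(real \<Rightarrow> 'v set set) \<Rightarrow> 'v \<Rightarrow> real" where
  "tau A v = Sup {t. 0 \<le> t \<and> (\<forall>s. 0 \<le> s \<and> s < t \<longrightarrow> (\<exists>Q\<in>A s. v \<in> Q))}"

definition actconn :: "('e \<Rightarrow> 'v set) \<Rightarrow> (real \<Rightarrow> 'v set set) \<Rightarrow> (real \<Rightarrow> 'e set) \<Rightarrow> 'v \<Rightarrow> 'v \<Rightarrow> bool" where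
  "actconn ends A Ft u v \<longleftrightarrow>
     (\<exists>t\<ge>0. (\<exists>C\<in>comps ends (Ft t). u \<in> C \<and> v \<in> C) \<and> t \<le> tau A u \<and> t \<le> tau A v)"

definition actconn_set :: "('e \<Rightarrow> 'v set) \<Rightarrow> (real \<Rightarrow> 'v set set) \<Rightarrow> (real \<Rightarrow> 'e set) \<Rightarrow> 'v set \<Rightarrow> bool" where
  "actconn_set ends A Ft S \<longleftrightarrow> (\<exists>w. S \<subseteq> {u. actconn ends A Ft w u})"

definition Usep :: "'v set set \<Rightarrow> (real \<Rightarrow> 'v set set) \<Rightarrow> 'v set set" where
  "Usep D A = {U. yfin A U \<noteq> 0 \<and> (\<exists>d\<in>D. separates U d)}"

type_synonym ('v, 'e) forest = "'v set \<times> 'e set"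

definition init_forests :: "('e \<Rightarrow> 'v set) \<Rightarrow> 'e set \<Rightarrow> ('v, 'e) forest set" where
  "init_forests ends OPT = {(K, {e\<in>OPT. ends e \<subseteq> K}) | K. K \<in> comps ends OPT}"

definition connects :: "('e \<Rightarrow> 'v set) \<Rightarrow> ('v, 'e) forest \<Rightarrow> 'v set \<Rightarrow> bool" where
  "connects ends Fo d \<longleftrightarrow> d \<subseteq> fst Fo \<and> (\<forall>a\<in>d. \<forall>b\<in>d. conn ends (snd Fo) a b)"

definition merge_step :: "('e \<Rightarrow> 'v set) \<Rightarrow> 'v set set \<Rightarrow> 'v set
     \<Rightarrow> ('v, 'e) forest set \<Rightarrow> ('v, 'e) forest set" where
  "merge_step ends D U \<F> =
     (let M = {Fo\<in>\<F>. \<exists>d\<in>D. separates U d \<and> connects ends Fo d}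
      in if M = {} then \<F> else insert (\<Union>(fst ` M), \<Union>(snd ` M)) (\<F> - M))"

text \<open>Process the sets of U_sep in the order given by the list Us.\<close>
definition canon_forests :: "('e \<Rightarrow> 'v set) \<Rightarrow> 'v set set \<Rightarrow> 'e set \<Rightarrow> 'v set list
     \<Rightarrow> ('v, 'e) forest set" where
  "canon_forests ends D OPT Us = fold (merge_step ends D) Us (init_forests ends OPT)"

definition fcomps :: "('e \<Rightarrow> 'v set) \<Rightarrow> ('v, 'e) forest \<Rightarrow> 'v set set" where
  "fcomps ends Fo = {{w\<in>fst Fo. conn ends (snd Fo) v w} | v. v \<in> fst Fo}"

definition Sset :: "('e \<Rightarrow> 'v set) \<Rightarrow> (real \<Rightarrow> 'v set set) \<Rightarrow> (real \<Rightarrow> 'e set) \<Rightarrow> 'v \<Rightarrow> 'v set \<Rightarrow> 'v set" where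
  "Sset ends A Ft r T = {v\<in>T. actconn ends A Ft r v}"

definition canon_coll :: "('e \<Rightarrow> 'v set) \<Rightarrow> (real \<Rightarrow> 'v set set) \<Rightarrow> (real \<Rightarrow> 'e set)
     \<Rightarrow> (('v, 'e) forest \<Rightarrow> 'v) \<Rightarrow> ('v, 'e) forest set \<Rightarrow> 'v set set" where
  "canon_coll ends A Ft r \<F> =
     {S. \<exists>Fo\<in>\<F>. \<exists>T\<in>fcomps ends Fo. S = Sset ends A Ft (r Fo) T \<and> S \<noteq> {}}"

definition is_tree :: "('e \<Rightarrow> 'v set) \<Rightarrow> ('v, 'e) forest \<Rightarrow> bool" where
  "is_tree ends G \<longleftrightarrow> (\<forall>e\<in>snd G. ends e \<subseteq> fst G) \<and> fst G \<noteq> {}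
     \<and> (\<forall>u\<in>fst G. \<forall>v\<in>fst G. conn ends (snd G) u v) \<and> card (snd G) + 1 = card (fst G)"

definition is_subtree_conn :: "('e \<Rightarrow> 'v set) \<Rightarrow> ('v, 'e) forest \<Rightarrow> 'v set \<Rightarrow> ('v, 'e) forest \<Rightarrow> bool" where
  "is_subtree_conn ends T S G \<longleftrightarrow> fst G \<subseteq> fst T \<and> snd G \<subseteq> snd T \<and> is_tree ends G
     \<and> S \<subseteq> fst G"

definition is_min_subtree :: "('e \<Rightarrow> 'v set) \<Rightarrow> ('v, 'e) forest \<Rightarrow> 'v set \<Rightarrow> ('v, 'e) forest \<Rightarrow> bool" where
  "is_min_subtree ends T S G \<longleftrightarrow> is_subtree_conn ends T S G
     \<and> (\<forall>G'. is_subtree_conn ends T S G' \<and> fst G' \<subseteq> fst G \<and> snd G' \<subseteq> snd G \<longrightarrow> G' = G)"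

definition T_S :: "('e \<Rightarrow> 'v set) \<Rightarrow> ('v, 'e) forest \<Rightarrow> 'v set \<Rightarrow> 'v set \<Rightarrow> ('v, 'e) forest" where
  "T_S ends Fo T S = (SOME G. is_min_subtree ends (T, {e\<in>snd Fo. ends e \<subseteq> T}) S G)"

definition agreeable :: "('e \<Rightarrow> 'v set) \<Rightarrow> 'v set set \<Rightarrow> (real \<Rightarrow> 'v set set) \<Rightarrow> 'e set
     \<Rightarrow> 'v set set \<Rightarrow> bool" where
  "agreeable ends D A OPT \<S> \<longleftrightarrow>
     (\<forall>S\<in>\<S>. \<exists>K\<in>comps ends OPT. S \<subseteq> K)
   \<and> (\<forall>K\<in>comps ends OPT. \<forall>S1\<in>\<S>. \<forall>S2\<in>\<S>. S1 \<subseteq> K \<longrightarrow> S2 \<subseteq> K \<longrightarrow> S1 = S2)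
   \<and> (\<forall>d1\<in>D. \<forall>d2\<in>D. (\<exists>U. yfin A U \<noteq> 0 \<and> separates U d1 \<and> separates U d2)
        \<longrightarrow> ((\<exists>S\<in>\<S>. d1 \<subseteq> S) \<longleftrightarrow> (\<exists>S\<in>\<S>. d2 \<subseteq> S)))"

end

theory Submission
  imports Defs
begin

section \<open>Graph lemmas\<close>

lemma conn_refl[simp]: "conn ends H u u"
  by (simp add: conn_def)

lemma conn_sym: assumes "conn ends H u v" shows "conn ends H v u"
proof -
  let ?R = "{(a, b). \<exists>e\<in>H. ends e = {a, b}}"
  have "?R\<inverse> \<subseteq> ?R"
  proof
    fix p assume "p \<in> ?R\<inverse>"
    then obtain a b e where "p = (a, b)" "e \<in> H" "ends e = {b, a}" by auto
    then show "p \<in> ?R" by (auto simp: insert_commute)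
  qed
  then have "(?R\<inverse>)\<^sup>* \<subseteq> ?R\<^sup>*" by (rule rtrancl_mono)
  with assms show ?thesis unfolding conn_def by (meson rtrancl_converseI subsetD)
qed

lemma conn_trans: "conn ends H u v \<Longrightarrow> conn ends H v w \<Longrightarrow> conn ends H u w"
  unfolding conn_def by (meson rtrancl_trans)

lemma conn_mono: "H \<subseteq> H' \<Longrightarrow> conn ends H u v \<Longrightarrow> conn ends H' u v"
  proof -
  assume "H \<subseteq> H'" "conn ends H u v"
  then have "{(a, b). \<exists>e\<in>H. ends e = {a, b}} \<subseteq> {(a, b). \<exists>e\<in>H'. ends e = {a, b}}" by blast
  then show ?thesis using \<open>conn ends H u v\<close> unfolding conn_def by (meson rtrancl_mono subsetD)
qed

lemma conn_step: "e \<in> H \<Longrightarrow> ends e = {a, b} \<Longrightarrow> conn ends H a b"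
  unfolding conn_def by auto

lemma conn_cross:
  assumes "conn ends H x y" "x \<in> W" "y \<notin> W"
  shows "\<exists>e\<in>H. \<exists>p q. ends e = {p, q} \<and> p \<in> W \<and> q \<notin> W"
proof -
  have "(x, y) \<in> {(a, b). \<exists>e\<in>H. ends e = {a, b}}\<^sup>*" using assms(1) by (simp add: conn_def)
  then show ?thesis using assms(3)
  proof (induction rule: rtrancl_induct)
    case base then show ?case using assms(2) by simp
  next
    case (step z y)
    show ?case
    proof (cases "z \<in> W")
      case True with step show ?thesis by blast
    next
      case False with step show ?thesis by blast
    qed
  qed
qed

lemma conn_closed:
  assumes "\<forall>e\<in>H. ends e \<subseteq> W" "x \<in> W" "conn ends H x y" shows "y \<in> W"
  using conn_cross[OF assms(3) assms(2)] assms(1) by blast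

lemma conn_restrict:
  assumes cl: "\<forall>x\<in>W. \<forall>y. conn ends H x y \<longrightarrow> y \<in> W" and x: "x \<in> W"
    and c: "conn ends H x y"
  shows "conn ends {e\<in>H. ends e \<subseteq> W} x y"
proof -
  have "(x, y) \<in> {(a, b). \<exists>e\<in>H. ends e = {a, b}}\<^sup>*" using c by (simp add: conn_def)
  then show ?thesis
  proof (induction rule: rtrancl_induct)
    case base then show ?case by simp
  next
    case (step z y)
    from step(2) obtain e where e: "e \<in> H" "ends e = {z, y}" by auto
    have cz: "conn ends H x z" using step(1) by (simp add: conn_def)
    have zW: "z \<in> W" using cl x cz by blast
    have czy: "conn ends H z y" by (rule conn_step[of e H ends z y, OF e])
    have "conn ends H x y" by (rule conn_trans[OF cz czy])
    then have yW: "y \<in> W" using cl x by blast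
    have eW: "e \<in> {e\<in>H. ends e \<subseteq> W}" using e zW yW by simp
    have "conn ends {e\<in>H. ends e \<subseteq> W} z y" by (rule conn_step[of e _ ends z y, OF eW e(2)])
    then show ?case by (rule conn_trans[OF step.IH])
  qed
qed

lemma comps_iff: "C \<in> comps ends H \<longleftrightarrow> (\<exists>v. C = {w. conn ends H v w})"
  by (auto simp: comps_def)

lemma comp_in: "{w. conn ends H v w} \<in> comps ends H"
  by (auto simp: comps_def)

lemma comp_eq: assumes "C \<in> comps ends H" "u \<in> C" shows "C = {w. conn ends H u w}"
proof -
  obtain v where C: "C = {w. conn ends H v w}" using assms(1) by (auto simp: comps_def)
  then have "conn ends H v u" using assms(2) by simp
  then show ?thesis unfolding C by (metis conn_sym conn_trans)
qed

lemma in_comp_conn: assumes "C \<in> comps ends H" "u \<in> C" "v \<in> C" shows "conn ends H u v"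
proof -
  have "C = {w. conn ends H u w}" by (rule comp_eq[OF assms(1,2)])
  then show ?thesis using assms(3) by simp
qed

lemma comps_disj: assumes "C1 \<in> comps ends H" "C2 \<in> comps ends H" "x \<in> C1" "x \<in> C2" shows "C1 = C2"
proof -
  have "C1 = {w. conn ends H x w}" by (rule comp_eq[OF assms(1,3)])
  moreover have "C2 = {w. conn ends H x w}" by (rule comp_eq[OF assms(2,4)])
  ultimately show ?thesis by simp
qed

lemma comp_closed: assumes "C \<in> comps ends H" "u \<in> C" "conn ends H u v" shows "v \<in> C"
proof -
  have "C = {w. conn ends H u w}" by (rule comp_eq[OF assms(1,2)])
  then show ?thesis using assms(3) by simp
qed

section \<open>Trees\<close>

lemma tree_grow:
  fixes ends :: "'e::finite \<Rightarrow> 'v::finite set"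
  assumes Fin: "\<forall>e\<in>F. ends e \<subseteq> W" and cW: "\<forall>u\<in>W. \<forall>v\<in>W. conn ends F u v"
  shows "card (W - W0) = n \<Longrightarrow> W0 \<subseteq> W \<Longrightarrow> is_tree ends (W0, F0) \<Longrightarrow> F0 \<subseteq> F
           \<Longrightarrow> \<exists>F'\<subseteq>F. is_tree ends (W, F')"
proof (induction n arbitrary: W0 F0)
  case 0
  then have "W - W0 = {}" by simp
  with 0 have "W0 = W" by blast
  with 0 show ?case by blast
next
  case (Suc n)
  have tr: "\<forall>e\<in>F0. ends e \<subseteq> W0" "W0 \<noteq> {}" "\<forall>u\<in>W0. \<forall>v\<in>W0. conn ends F0 u v"
    "card F0 + 1 = card W0"
    using Suc.prems(3) by (auto simp: is_tree_def)
  obtain y where y: "y \<in> W" "y \<notin> W0" using Suc.prems(1)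
    by (metis Diff_iff card.empty ex_in_conv nat.distinct(1))
  obtain x where x: "x \<in> W0" using tr(2) by blast
  have "conn ends F x y" using cW x y Suc.prems(2) by blast
  from conn_cross[OF this x y(2)] obtain e p q where
    e: "e \<in> F" "ends e = {p, q}" "p \<in> W0" "q \<notin> W0" by blast
  have qW: "q \<in> W" using Fin e by blast
  define W1 where "W1 = insert q W0"
  define F1 where "F1 = insert e F0"
  have "W - W1 = (W - W0) - {q}" unfolding W1_def by blast
  moreover have "q \<in> W - W0" using qW e(4) by blast
  ultimately have c1: "card (W - W1) = n" using Suc.prems(1) by (simp add: card_Diff_singleton)
  have s1: "W1 \<subseteq> W" unfolding W1_def using qW Suc.prems(2) by blast
  have f1: "F1 \<subseteq> F" unfolding F1_def using e(1) Suc.prems(4) by blast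
  have eF0: "e \<notin> F0" using tr(1) e(2,4) by blast
  have card1: "card F1 + 1 = card W1" unfolding F1_def W1_def using eF0 e(4) tr(4) by simp
  have pc: "conn ends F1 p u" if "u \<in> W1" for u
  proof (cases "u = q")
    case True
    have "e \<in> F1" unfolding F1_def by simp
    then show ?thesis using True conn_step[of e F1 ends p q] e(2) by simp
  next
    case False
    then have "u \<in> W0" using that unfolding W1_def by simp
    then have "conn ends F0 p u" using tr(3) e(3) by blast
    then show ?thesis by (rule conn_mono[rotated]) (auto simp: F1_def)
  qed
  have allc: "\<forall>u\<in>W1. \<forall>v\<in>W1. conn ends F1 u v"
  proof (intro ballI)
    fix u v assume "u \<in> W1" "v \<in> W1"
    then have "conn ends F1 p u" "conn ends F1 p v" using pc by auto
    then show "conn ends F1 u v" using conn_sym[of ends F1 p u] conn_trans[of ends F1 u p v] by blast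
  qed
  have "is_tree ends (W1, F1)" unfolding is_tree_def using allc card1 tr(1) e(2,3)
    by (auto simp: W1_def F1_def)
  from Suc.IH[OF c1 s1 this f1] show ?case .
qed

lemma spanning_tree:
  fixes ends :: "'e::finite \<Rightarrow> 'v::finite set"
  assumes Fin: "\<forall>e\<in>F. ends e \<subseteq> W" and cW: "\<forall>u\<in>W. \<forall>v\<in>W. conn ends F u v"
    and ne: "W \<noteq> {}"
  shows "\<exists>F'\<subseteq>F. is_tree ends (W, F')"
proof -
  obtain x where x: "x \<in> W" using ne by blast
  have "is_tree ends ({x}, {})" by (simp add: is_tree_def)
  then show ?thesis using tree_grow[OF Fin cW refl, of "{x}" "{}"] x by simp
qed

lemma min_subtree_ex:
  fixes ends :: "'e::finite \<Rightarrow> 'v::finite set"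
  assumes "is_subtree_conn ends T S G0"
  shows "\<exists>G. is_min_subtree ends T S G"
proof -
  obtain G where G: "is_subtree_conn ends T S G"
    and mn: "\<forall>G'. is_subtree_conn ends T S G' \<longrightarrow>
              card (fst G) + card (snd G) \<le> card (fst G') + card (snd G')"
    using ex_has_least_nat[of "is_subtree_conn ends T S" G0 "\<lambda>G. card (fst G) + card (snd G)"] assms
    by blast
  have "is_min_subtree ends T S G"
    unfolding is_min_subtree_def
  proof (intro conjI allI impI)
    show "is_subtree_conn ends T S G" by (rule G)
    fix G' assume a: "is_subtree_conn ends T S G' \<and> fst G' \<subseteq> fst G \<and> snd G' \<subseteq> snd G"
    have c1: "card (fst G') \<le> card (fst G)" using a by (simp add: card_mono)
    have c2: "card (snd G') \<le> card (snd G)" using a by (simp add: card_mono)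
    have "card (fst G) + card (snd G) \<le> card (fst G') + card (snd G')" using mn a by blast
    then have "card (fst G') = card (fst G)" "card (snd G') = card (snd G)" using c1 c2 by auto
    then have "fst G' = fst G" "snd G' = snd G" using a card_subset_eq[of "fst G" "fst G'"]
        card_subset_eq[of "snd G" "snd G'"] by auto
    then show "G' = G" by (simp add: prod_eq_iff)
  qed
  then show ?thesis by blast
qed

lemma T_S_good:
  fixes ends :: "'e::finite \<Rightarrow> 'v::finite set"
  assumes "is_subtree_conn ends (T, {e\<in>snd Fo. ends e \<subseteq> T}) S G0"
  shows "S \<subseteq> fst (T_S ends Fo T S) \<and> (\<forall>u\<in>S. \<forall>v\<in>S. conn ends (snd (T_S ends Fo T S)) u v)"
proof -
  have "\<exists>G. is_min_subtree ends (T, {e\<in>snd Fo. ends e \<subseteq> T}) S G" by (rule min_subtree_ex[OF assms])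
  then have "is_min_subtree ends (T, {e\<in>snd Fo. ends e \<subseteq> T}) S (T_S ends Fo T S)"
    unfolding T_S_def by (rule someI_ex)
  then have "is_tree ends (T_S ends Fo T S)" "S \<subseteq> fst (T_S ends Fo T S)"
    by (auto simp: is_min_subtree_def is_subtree_conn_def)
  then show ?thesis unfolding is_tree_def by blast
qed

section \<open>Forest invariants\<close>

definition closedW :: "('e \<Rightarrow> 'v set) \<Rightarrow> 'e set \<Rightarrow> 'v set \<Rightarrow> bool" where
  "closedW ends H W \<longleftrightarrow> (\<forall>x\<in>W. \<forall>y. conn ends H x y \<longrightarrow> y \<in> W)"

definition Inv :: "('e \<Rightarrow> 'v set) \<Rightarrow> 'v set set \<Rightarrow> 'e set \<Rightarrow> ('v, 'e) forest set \<Rightarrow> bool" where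
  "Inv ends D OPT FF \<longleftrightarrow>
     (\<forall>Fo\<in>FF. closedW ends OPT (fst Fo) \<and> snd Fo = {e\<in>OPT. ends e \<subseteq> fst Fo})
   \<and> (\<forall>F1\<in>FF. \<forall>F2\<in>FF. F1 \<noteq> F2 \<longrightarrow> fst F1 \<inter> fst F2 = {})
   \<and> (\<forall>d\<in>D. \<exists>Fo\<in>FF. connects ends Fo d)"

lemma connects_mono:
  "connects ends Fo d \<Longrightarrow> fst Fo \<subseteq> fst N \<Longrightarrow> snd Fo \<subseteq> snd N \<Longrightarrow> connects ends N d"
proof -
  assume a: "connects ends Fo d" "fst Fo \<subseteq> fst N" "snd Fo \<subseteq> snd N"
  have "\<forall>x\<in>d. \<forall>y\<in>d. conn ends (snd N) x y"
  proof (intro ballI)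
    fix x y assume "x \<in> d" "y \<in> d"
    then have "conn ends (snd Fo) x y" using a(1) unfolding connects_def by blast
    then show "conn ends (snd N) x y" by (rule conn_mono[OF a(3)])
  qed
  moreover have "d \<subseteq> fst N" using a(1,2) unfolding connects_def by blast
  ultimately show ?thesis unfolding connects_def by blast
qed

lemma merge_step_eq:
  "merge_step ends D U FF =
     (if {Fo\<in>FF. \<exists>d\<in>D. separates U d \<and> connects ends Fo d} = {} then FF
      else insert (\<Union>(fst ` {Fo\<in>FF. \<exists>d\<in>D. separates U d \<and> connects ends Fo d}),
                   \<Union>(snd ` {Fo\<in>FF. \<exists>d\<in>D. separates U d \<and> connects ends Fo d}))
           (FF - {Fo\<in>FF. \<exists>d\<in>D. separates U d \<and> connects ends Fo d}))"
  by (simp add: merge_step_def Let_def)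

lemma merge_sup:
  assumes "Fo \<in> FF"
  shows "\<exists>Fo'\<in>merge_step ends D U FF. fst Fo \<subseteq> fst Fo' \<and> snd Fo \<subseteq> snd Fo'"
proof (cases "Fo \<in> {Fo\<in>FF. \<exists>d\<in>D. separates U d \<and> connects ends Fo d}")
  case True
  then show ?thesis unfolding merge_step_eq by auto
next
  case False
  then show ?thesis using assms unfolding merge_step_eq by auto
qed

lemma fold_sup:
  assumes "Fo \<in> FF"
  shows "\<exists>Fo'\<in>fold (merge_step ends D) Us FF. fst Fo \<subseteq> fst Fo' \<and> snd Fo \<subseteq> snd Fo'"
  using assms
proof (induction Us arbitrary: FF Fo)
  case Nil then show ?case by auto
next
  case (Cons U Us)
  obtain Fo1 where F1: "Fo1 \<in> merge_step ends D U FF" "fst Fo \<subseteq> fst Fo1" "snd Fo \<subseteq> snd Fo1"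
    using merge_sup[OF Cons.prems] by blast
  obtain Fo2 where "Fo2 \<in> fold (merge_step ends D) Us (merge_step ends D U FF)"
      "fst Fo1 \<subseteq> fst Fo2" "snd Fo1 \<subseteq> snd Fo2"
    using Cons.IH[OF F1(1)] by blast
  moreover have "fst Fo \<subseteq> fst Fo2" "snd Fo \<subseteq> snd Fo2" using F1 calculation by auto
  ultimately show ?case by (simp only: fold_Cons comp_def) blast
qed

lemma union_snd:
  assumes edges: "\<forall>e. card (ends e) = 2"
    and M: "\<forall>m\<in>M. closedW ends OPT (fst m) \<and> snd m = {e\<in>OPT. ends e \<subseteq> fst m}"
  shows "closedW ends OPT (\<Union>(fst ` M)) \<and> \<Union>(snd ` M) = {e\<in>OPT. ends e \<subseteq> \<Union>(fst ` M)}"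
proof
  show "closedW ends OPT (\<Union>(fst ` M))" using M unfolding closedW_def by blast
  show "\<Union>(snd ` M) = {e\<in>OPT. ends e \<subseteq> \<Union>(fst ` M)}"
  proof
    show "\<Union>(snd ` M) \<subseteq> {e\<in>OPT. ends e \<subseteq> \<Union>(fst ` M)}" using M by blast
    show "{e\<in>OPT. ends e \<subseteq> \<Union>(fst ` M)} \<subseteq> \<Union>(snd ` M)"
    proof
      fix e assume e: "e \<in> {e\<in>OPT. ends e \<subseteq> \<Union>(fst ` M)}"
      obtain a b where ab: "ends e = {a, b}" using edges card_2_iff by metis
      then obtain m where m: "m \<in> M" "a \<in> fst m" using e by auto
      have "conn ends OPT a b" using e ab by (intro conn_step[of e OPT ends a b]) auto
      then have "b \<in> fst m" using M m unfolding closedW_def by blast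
      then have "e \<in> snd m" using M m e ab by auto
      then show "e \<in> \<Union>(snd ` M)" using m by blast
    qed
  qed
qed

lemma Inv_merge:
  assumes edges: "\<forall>e. card (ends e) = 2" and I: "Inv ends D OPT FF"
  shows "Inv ends D OPT (merge_step ends D U FF)"
proof (cases "{Fo\<in>FF. \<exists>d\<in>D. separates U d \<and> connects ends Fo d} = {}")
  case True
  then show ?thesis using I unfolding merge_step_eq by simp
next
  case False
  define M where "M = {Fo\<in>FF. \<exists>d\<in>D. separates U d \<and> connects ends Fo d}"
  define N where "N = (\<Union>(fst ` M), \<Union>(snd ` M))"
  have eq0: "merge_step ends D U FF = (if M = {} then FF else insert N (FF - M))"
    unfolding M_def N_def by (rule merge_step_eq)
  have eq: "merge_step ends D U FF = insert N (FF - M)"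
    using eq0 False[folded M_def] by simp
  have MF: "M \<subseteq> FF" unfolding M_def by blast
  have I1: "\<forall>Fo\<in>FF. closedW ends OPT (fst Fo) \<and> snd Fo = {e\<in>OPT. ends e \<subseteq> fst Fo}"
    using I by (simp add: Inv_def)
  have I2: "\<forall>F1\<in>FF. \<forall>F2\<in>FF. F1 \<noteq> F2 \<longrightarrow> fst F1 \<inter> fst F2 = {}"
    using I by (simp add: Inv_def)
  have I3: "\<forall>d\<in>D. \<exists>Fo\<in>FF. connects ends Fo d"
    using I by (simp add: Inv_def)
  have IM: "\<forall>m\<in>M. closedW ends OPT (fst m) \<and> snd m = {e\<in>OPT. ends e \<subseteq> fst m}"
  proof
    fix m assume "m \<in> M"
    then have "m \<in> FF" using MF by (rule subsetD[rotated])
    then show "closedW ends OPT (fst m) \<and> snd m = {e\<in>OPT. ends e \<subseteq> fst m}" using I1 by (rule bspec[rotated])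
  qed
  have N1: "closedW ends OPT (fst N) \<and> snd N = {e\<in>OPT. ends e \<subseteq> fst N}"
    using union_snd[OF edges IM] unfolding N_def by simp
  have J1: "\<forall>Fo\<in>insert N (FF - M). closedW ends OPT (fst Fo) \<and> snd Fo = {e\<in>OPT. ends e \<subseteq> fst Fo}"
  proof
    fix Fo assume "Fo \<in> insert N (FF - M)"
    then consider "Fo = N" | "Fo \<in> FF" by auto
    then show "closedW ends OPT (fst Fo) \<and> snd Fo = {e\<in>OPT. ends e \<subseteq> fst Fo}"
    proof cases
      case 1 then show ?thesis using N1 by simp
    next
      case 2 then show ?thesis using I1 by (rule bspec[rotated])
    qed
  qed
  have disjN: "fst N \<inter> fst F = {}" if "F \<in> FF - M" for F
  proof -
    have "fst m \<inter> fst F = {}" if m: "m \<in> M" for m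
    proof -
      have "m \<noteq> F" using m \<open>F \<in> FF - M\<close> by auto
      moreover have "m \<in> FF" "F \<in> FF" using m MF \<open>F \<in> FF - M\<close> by auto
      ultimately show ?thesis using I2 by simp
    qed
    then show ?thesis unfolding N_def by auto
  qed
  have J2: "\<forall>F1\<in>insert N (FF - M). \<forall>F2\<in>insert N (FF - M). F1 \<noteq> F2 \<longrightarrow> fst F1 \<inter> fst F2 = {}"
  proof (intro ballI impI)
    fix F1 F2 assume a: "F1 \<in> insert N (FF - M)" "F2 \<in> insert N (FF - M)" "F1 \<noteq> F2"
    show "fst F1 \<inter> fst F2 = {}"
    proof (cases "F1 = N")
      case True
      then have "F2 \<in> FF - M" using a by auto
      then show ?thesis using disjN True by simp
    next
      case False
      then have f1: "F1 \<in> FF - M" using a by auto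
      show ?thesis
      proof (cases "F2 = N")
        case True
        then show ?thesis using disjN[OF f1] by auto
      next
        case False
        then have "F2 \<in> FF" using a by auto
        then show ?thesis using I2 f1 a(3) by auto
      qed
    qed
  qed
  have J3: "\<forall>d\<in>D. \<exists>Fo\<in>merge_step ends D U FF. connects ends Fo d"
  proof
    fix d assume "d \<in> D"
    then obtain Fo where Fo: "Fo \<in> FF" "connects ends Fo d" using I3 by blast
    obtain Fo' where "Fo' \<in> merge_step ends D U FF" "fst Fo \<subseteq> fst Fo'" "snd Fo \<subseteq> snd Fo'"
      using merge_sup[OF Fo(1), of ends D U] by blast
    then show "\<exists>Fo\<in>merge_step ends D U FF. connects ends Fo d"
      using connects_mono[OF Fo(2)] by blast
  qed
  have "Inv ends D OPT (insert N (FF - M))"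
    unfolding Inv_def using J1 J2 J3[unfolded eq] by (intro conjI)
  then show ?thesis unfolding eq .
qed

lemma Inv_fold:
  assumes edges: "\<forall>e. card (ends e) = 2"
  shows "Inv ends D OPT FF \<Longrightarrow> Inv ends D OPT (fold (merge_step ends D) Us FF)"
  by (induction Us arbitrary: FF) (auto intro: Inv_merge[OF edges])

lemma both_merge:
  assumes I: "Inv ends D OPT FF" and d: "d1 \<in> D" "d2 \<in> D" "separates U d1" "separates U d2"
  shows "\<exists>Fo\<in>merge_step ends D U FF. connects ends Fo d1 \<and> connects ends Fo d2"
proof -
  define M where "M = {Fo\<in>FF. \<exists>d\<in>D. separates U d \<and> connects ends Fo d}"
  define N where "N = (\<Union>(fst ` M), \<Union>(snd ` M))"
  obtain F1 where F1: "F1 \<in> FF" "connects ends F1 d1" using I d unfolding Inv_def by blast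
  obtain F2 where F2: "F2 \<in> FF" "connects ends F2 d2" using I d unfolding Inv_def by blast
  have m1: "F1 \<in> M" unfolding M_def using F1 d by blast
  have m2: "F2 \<in> M" unfolding M_def using F2 d by blast
  have eq0: "merge_step ends D U FF = (if M = {} then FF else insert N (FF - M))"
    unfolding M_def N_def by (rule merge_step_eq)
  have eq: "merge_step ends D U FF = insert N (FF - M)"
    using eq0 m1 by auto
  have "connects ends N d1" by (rule connects_mono[OF F1(2)]) (use m1 in \<open>auto simp: N_def\<close>)
  moreover have "connects ends N d2" by (rule connects_mono[OF F2(2)]) (use m2 in \<open>auto simp: N_def\<close>)
  ultimately show ?thesis using eq by auto
qed

lemma Inv_init:
  assumes feas: "feasible ends D OPT"
  shows "Inv ends D OPT (init_forests ends OPT)"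
proof -
  have J1: "\<forall>Fo\<in>init_forests ends OPT. closedW ends OPT (fst Fo) \<and> snd Fo = {e\<in>OPT. ends e \<subseteq> fst Fo}"
    unfolding init_forests_def closedW_def using comp_closed by fastforce
  have J2: "\<forall>F1\<in>init_forests ends OPT. \<forall>F2\<in>init_forests ends OPT. F1 \<noteq> F2 \<longrightarrow> fst F1 \<inter> fst F2 = {}"
  proof (intro ballI impI)
    fix F1 F2 assume a: "F1 \<in> init_forests ends OPT" "F2 \<in> init_forests ends OPT" "F1 \<noteq> F2"
    then obtain K1 K2 where K: "K1 \<in> comps ends OPT" "K2 \<in> comps ends OPT"
      "F1 = (K1, {e\<in>OPT. ends e \<subseteq> K1})" "F2 = (K2, {e\<in>OPT. ends e \<subseteq> K2})"
      unfolding init_forests_def by blast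
    have "K1 \<noteq> K2" using K a(3) by auto
    then show "fst F1 \<inter> fst F2 = {}" using K comps_disj[of K1 ends OPT K2] by auto
  qed
  have J3: "\<forall>d\<in>D. \<exists>Fo\<in>init_forests ends OPT. connects ends Fo d"
  proof
    fix d assume "d \<in> D"
    then obtain C where C: "C \<in> comps ends OPT" "d \<subseteq> C" using feas unfolding feasible_def by blast
    have cl: "\<forall>x\<in>C. \<forall>y. conn ends OPT x y \<longrightarrow> y \<in> C" using comp_closed[OF C(1)] by blast
    have "connects ends (C, {e\<in>OPT. ends e \<subseteq> C}) d"
      unfolding connects_def
    proof (simp add: C(2), intro ballI)
      fix a b assume "a \<in> d" "b \<in> d"
      then have ab: "a \<in> C" "b \<in> C" using C by auto
      have "conn ends OPT a b" by (rule in_comp_conn[OF C(1) ab])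
      then show "conn ends {e\<in>OPT. ends e \<subseteq> C} a b" by (rule conn_restrict[OF cl ab(1)])
    qed
    moreover have "(C, {e\<in>OPT. ends e \<subseteq> C}) \<in> init_forests ends OPT"
      unfolding init_forests_def using C by blast
    ultimately show "\<exists>Fo\<in>init_forests ends OPT. connects ends Fo d" by blast
  qed
  show ?thesis unfolding Inv_def using J1 J2 J3 by blast
qed

lemma fcomp_props:
  assumes I: "Inv ends D OPT FF" and Fo: "Fo \<in> FF" and T: "T \<in> fcomps ends Fo"
  shows "T \<in> comps ends OPT" "T \<subseteq> fst Fo" "T \<noteq> {}"
    "\<forall>u\<in>T. \<forall>v\<in>T. conn ends {e\<in>snd Fo. ends e \<subseteq> T} u v"
proof -
  have cl: "closedW ends OPT (fst Fo)" and sn: "snd Fo = {e\<in>OPT. ends e \<subseteq> fst Fo}"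
    using I Fo unfolding Inv_def by auto
  obtain v where v: "v \<in> fst Fo" "T = {w\<in>fst Fo. conn ends (snd Fo) v w}"
    using T unfolding fcomps_def by blast
  have sub: "snd Fo \<subseteq> OPT" using sn by auto
  have "T = {w. conn ends OPT v w}"
  proof (intro set_eqI iffI)
    fix w assume "w \<in> T"
    then show "w \<in> {w. conn ends OPT v w}" using v conn_mono[OF sub] by auto
  next
    fix w assume "w \<in> {w. conn ends OPT v w}"
    then have c: "conn ends OPT v w" by simp
    have "w \<in> fst Fo" using cl v(1) c unfolding closedW_def by blast
    moreover have "conn ends (snd Fo) v w" unfolding sn
      by (rule conn_restrict[OF _ v(1) c]) (use cl in \<open>simp add: closedW_def\<close>)
    ultimately show "w \<in> T" using v(2) by simp
  qed
  then show Tc: "T \<in> comps ends OPT" using comp_in by metis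
  show TF: "T \<subseteq> fst Fo" using v by auto
  show "T \<noteq> {}" using v by auto
  have eqE: "{e\<in>snd Fo. ends e \<subseteq> T} = {e\<in>OPT. ends e \<subseteq> T}" using sn TF by auto
  have clT: "\<forall>x\<in>T. \<forall>y. conn ends OPT x y \<longrightarrow> y \<in> T" using comp_closed[OF Tc] by blast
  show "\<forall>u\<in>T. \<forall>w\<in>T. conn ends {e\<in>snd Fo. ends e \<subseteq> T} u w"
  proof (intro ballI)
    fix u w assume uw: "u \<in> T" "w \<in> T"
    have "conn ends OPT u w" by (rule in_comp_conn[OF Tc uw])
    then show "conn ends {e\<in>snd Fo. ends e \<subseteq> T} u w" unfolding eqE by (rule conn_restrict[OF clT uw(1)])
  qed
qed

section \<open>Properties of runs\<close>

lemma eps_bound: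
  fixes c l L :: real
  assumes L: "0 \<le> L" and h: "\<And>d. 0 < d \<Longrightarrow> c \<le> l + L * d"
  shows "c \<le> l"
proof (rule field_le_epsilon)
  fix e :: real assume e: "0 < e"
  have "0 < e / (L + 1)" using e L by simp
  then have "c \<le> l + L * (e / (L + 1))" by (rule h)
  moreover have "L * (e / (L + 1)) \<le> e"
  proof -
    have "L * (e / (L + 1)) = e * (L / (L + 1))" by simp
    moreover have "L / (L + 1) \<le> 1" using L by simp
    moreover have "e * (L / (L + 1)) \<le> e" by (rule mult_left_le) (use e calculation(2) in auto)
    ultimately show ?thesis by (simp add: mult.commute)
  qed
  ultimately show "c \<le> l + e" by linarith
qed

locale runF =
  fixes ends :: "'e::finite \<Rightarrow> 'v::finite set"
    and c :: "'e \<Rightarrow> real"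
    and D :: "'v set set"
    and eps :: real
    and A :: "real \<Rightarrow> 'v set set"
    and Ft :: "real \<Rightarrow> 'e set"
    and OPT :: "'e set"
  assumes edges: "\<forall>e. card (ends e) = 2"
    and run: "is_run ends c D eps A Ft"
    and opt: "is_min_opt ends c D OPT"
begin

definition load :: "'e \<Rightarrow> real \<Rightarrow> real" where
  "load e t = (\<Sum>Q\<in>{Q. e \<in> delta ends Q}. yt A Q t)"

definition act :: "'v \<Rightarrow> real \<Rightarrow> bool" where
  "act v s \<longleftrightarrow> (\<exists>Q\<in>A s. v \<in> Q)"

definition comp :: "real \<Rightarrow> 'v \<Rightarrow> 'v set" where
  "comp t v = {w. conn ends (Ft t) v w}"

lemma meas: "{s. Q \<in> A s} \<in> sets lborel"
  using run unfolding is_run_def by blast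

lemma Ft_eq: "0 \<le> t \<Longrightarrow> Ft t = {e. c e \<le> load e t}"
  using run unfolding is_run_def load_def by blast

lemma A_eq: "0 \<le> t \<Longrightarrow> A t = {P \<in> comps ends (Ft t). dem_active D P \<or> 0 < budget eps D A P t}"
  using run unfolding is_run_def by blast

lemma feas: "feasible ends D OPT"
  using opt unfolding is_min_opt_def by blast

lemma Ico_sets: "{a..<b::real} \<in> sets lborel" by simp

lemma yt_fm: "{0..<t} \<inter> {s. Q \<in> A s} \<in> fmeasurable lborel"
proof -
  have "cbox 0 t \<inter> ({0..<t} \<inter> {s. Q \<in> A s}) \<in> fmeasurable lborel"
    by (rule fmeasurable_Int_fmeasurable[OF fmeasurable_cbox]) (use meas in simp)
  moreover have "cbox 0 t \<inter> ({0..<t} \<inter> {s. Q \<in> A s}) = {0..<t} \<inter> {s. Q \<in> A s}"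
    by auto
  ultimately show ?thesis by simp
qed

lemma yt_nonneg: "0 \<le> yt A Q t"
  unfolding yt_def by simp

lemma yt_mono: "t1 \<le> t2 \<Longrightarrow> yt A Q t1 \<le> yt A Q t2"
  unfolding yt_def
  by (rule measure_mono_fmeasurable[OF _ _ yt_fm]) (use meas in auto)

lemma Ico_fm: "{a..<b::real} \<in> fmeasurable lborel"
proof -
  have "cbox a b \<inter> {a..<b} \<in> fmeasurable lborel"
    by (rule fmeasurable_Int_fmeasurable[OF fmeasurable_cbox]) simp
  moreover have "cbox a b \<inter> {a..<b} = {a..<b}" by auto
  ultimately show ?thesis by simp
qed

lemma yt_lip: assumes "t1 \<le> t2" shows "yt A Q t2 \<le> yt A Q t1 + (t2 - t1)"
proof -
  let ?X = "{s. Q \<in> A s}"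
  have sub: "{0..<t2} \<inter> ?X \<subseteq> ({0..<t1} \<inter> ?X) \<union> {t1..<t2}" by auto
  have fm: "({0..<t1} \<inter> ?X) \<union> {t1..<t2} \<in> fmeasurable lborel"
    using yt_fm Ico_fm by (rule fmeasurable.Un)
  have "measure lborel ({0..<t2} \<inter> ?X) \<le> measure lborel (({0..<t1} \<inter> ?X) \<union> {t1..<t2})"
    by (rule measure_mono_fmeasurable[OF sub _ fm]) (use meas in simp)
  also have "\<dots> \<le> measure lborel ({0..<t1} \<inter> ?X) + measure lborel {t1..<t2}"
    by (rule measure_Un_le) (use meas in simp_all)
  also have "measure lborel {t1..<t2} = t2 - t1" using assms by simp
  finally show ?thesis unfolding yt_def .
qed

lemma yt_lower:
  assumes "0 \<le> T0" "T0 \<le> t" "\<forall>s. T0 \<le> s \<and> s < t \<longrightarrow> Q \<in> A s"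
  shows "t - T0 \<le> yt A Q t"
proof -
  have "{T0..<t} \<subseteq> {0..<t} \<inter> {s. Q \<in> A s}" using assms by auto
  then have "measure lborel {T0..<t} \<le> measure lborel ({0..<t} \<inter> {s. Q \<in> A s})"
    by (rule measure_mono_fmeasurable[OF _ _ yt_fm]) simp
  then show ?thesis using assms(2) unfolding yt_def by simp
qed

lemma yt_const:
  assumes "T0 \<le> t" "\<forall>s. T0 \<le> s \<longrightarrow> Q \<notin> A s"
  shows "yt A Q t = yt A Q T0"
proof -
  have "{0..<t} \<inter> {s. Q \<in> A s} = {0..<T0} \<inter> {s. Q \<in> A s}"
  proof (intro set_eqI iffI)
    fix x assume x: "x \<in> {0..<t} \<inter> {s. Q \<in> A s}"
    have "x < T0"
    proof (rule ccontr)
      assume "\<not> x < T0"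
      then have "T0 \<le> x" by simp
      then show False using assms(2) x by blast
    qed
    then show "x \<in> {0..<T0} \<inter> {s. Q \<in> A s}" using x by simp
  next
    fix x assume "x \<in> {0..<T0} \<inter> {s. Q \<in> A s}"
    then show "x \<in> {0..<t} \<inter> {s. Q \<in> A s}" using assms(1) by simp
  qed
  then show ?thesis unfolding yt_def by simp
qed

lemma load_mono: "t1 \<le> t2 \<Longrightarrow> load e t1 \<le> load e t2"
  unfolding load_def by (intro sum_mono yt_mono)

lemma load_lip:
  assumes "t1 \<le> t2"
  shows "load e t2 \<le> load e t1 + real (card {Q. e \<in> delta ends Q}) * (t2 - t1)"
proof -
  have "load e t2 \<le> (\<Sum>Q\<in>{Q. e \<in> delta ends Q}. yt A Q t1 + (t2 - t1))"
    unfolding load_def by (intro sum_mono yt_lip[OF assms])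
  also have "\<dots> = load e t1 + real (card {Q. e \<in> delta ends Q}) * (t2 - t1)"
    unfolding load_def by (simp add: sum.distrib)
  finally show ?thesis .
qed

lemma Ft_mono: "0 \<le> t1 \<Longrightarrow> t1 \<le> t2 \<Longrightarrow> Ft t1 \<subseteq> Ft t2"
proof -
  assume a: "0 \<le> t1" "t1 \<le> t2"
  have "\<forall>e. load e t1 \<le> load e t2" using load_mono[OF a(2)] by blast
  moreover have "0 \<le> t2" using a by simp
  ultimately show ?thesis using Ft_eq[OF a(1)] Ft_eq[of t2] by (auto intro: order_trans)
qed

lemma conn_Ft_mono: "0 \<le> t1 \<Longrightarrow> t1 \<le> t2 \<Longrightarrow> conn ends (Ft t1) u v \<Longrightarrow> conn ends (Ft t2) u v"
  using Ft_mono conn_mono by metis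

lemma A_comps: "0 \<le> s \<Longrightarrow> Q \<in> A s \<Longrightarrow> Q \<in> comps ends (Ft s)"
  using A_eq by blast

lemma act_comp: assumes "0 \<le> s" shows "act v s \<longleftrightarrow> comp s v \<in> A s"
proof
  assume "act v s"
  then obtain Q where Q: "Q \<in> A s" "v \<in> Q" unfolding act_def by blast
  have "Q = comp s v" unfolding comp_def by (rule comp_eq[OF A_comps[OF assms Q(1)] Q(2)])
  then show "comp s v \<in> A s" using Q by simp
next
  assume "comp s v \<in> A s"
  moreover have "v \<in> comp s v" unfolding comp_def by simp
  ultimately show "act v s" unfolding act_def by blast
qed

lemma dem_act:
  assumes "0 \<le> s" "{a, b} \<in> D" "\<not> conn ends (Ft s) a b"
  shows "act a s"
proof -
  have "dem_active D (comp s a)" unfolding dem_active_def comp_def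
    using assms(2,3) by force
  moreover have "comp s a \<in> comps ends (Ft s)" unfolding comp_def by (rule comp_in)
  ultimately have "comp s a \<in> A s" using A_eq[OF assms(1)] by blast
  then show ?thesis using act_comp[OF assms(1)] by blast
qed

lemma stabilize: "\<exists>T0\<ge>0. \<forall>t\<ge>T0. Ft t = Ft T0"
proof -
  define E' where "E' = {e. \<exists>t\<ge>0. e \<in> Ft t}"
  define te where "te e = (SOME t. t \<ge> 0 \<and> e \<in> Ft t)" for e
  have te: "te e \<ge> 0 \<and> e \<in> Ft (te e)" if "e \<in> E'" for e
    unfolding te_def by (rule someI_ex) (use that in \<open>simp add: E'_def\<close>)
  define T0 where "T0 = Max (insert 0 (te ` E'))"
  have fin: "finite (insert 0 (te ` E'))" by simp
  have T0: "0 \<le> T0" unfolding T0_def using fin by simp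
  have teT: "te e \<le> T0" if "e \<in> E'" for e unfolding T0_def using fin that by simp
  have "Ft t = Ft T0" if "T0 \<le> t" for t
  proof
    show "Ft T0 \<subseteq> Ft t" by (rule Ft_mono[OF T0 that])
    show "Ft t \<subseteq> Ft T0"
    proof
      fix e assume "e \<in> Ft t"
      moreover have "0 \<le> t" using T0(1) that by simp
      ultimately have eE: "e \<in> E'" unfolding E'_def by blast
      then have "e \<in> Ft (te e)" using te by blast
      then show "e \<in> Ft T0" using Ft_mono[of "te e" T0] te[OF eE] teT[OF eE] by blast
    qed
  qed
  then show ?thesis using T0 by blast
qed

end

context runF begin

lemma comp_A_stable:
  assumes T0: "0 \<le> T0" "\<forall>t\<ge>T0. Ft t = Ft T0" and t: "T0 \<le> t"
  shows "comp t v = comp T0 v"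
proof -
  have "Ft t = Ft T0" using T0(2) t by blast
  then show ?thesis unfolding comp_def by simp
qed

lemma load_ge: "P \<in> {Q. e \<in> delta ends Q} \<Longrightarrow> yt A P t \<le> load e t"
  unfolding load_def by (rule member_le_sum) (auto simp: yt_nonneg)

lemma eventually_conn:
  assumes d: "{a, b} \<in> D"
  shows "\<exists>t\<ge>0. conn ends (Ft t) a b"
proof (rule ccontr)
  assume nc: "\<not> (\<exists>t\<ge>0. conn ends (Ft t) a b)"
  obtain T0 where T0: "0 \<le> T0" "\<forall>t\<ge>T0. Ft t = Ft T0" using stabilize by blast
  define P where "P = comp T0 a"
  obtain C where C: "C \<in> comps ends OPT" "{a, b} \<subseteq> C" using feas d unfolding feasible_def by blast
  have co: "conn ends OPT a b" using in_comp_conn[OF C(1)] C(2) by blast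
  have aP: "a \<in> P" unfolding P_def comp_def by simp
  have bP: "b \<notin> P" unfolding P_def comp_def using nc T0(1) by blast
  obtain e p q where e: "e \<in> OPT" "ends e = {p, q}" "p \<in> P" "q \<notin> P"
    using conn_cross[OF co aP bP] by blast
  have eP: "P \<in> {Q. e \<in> delta ends Q}" unfolding delta_def using e by auto
  have PA: "P \<in> A s" if "T0 \<le> s" for s
  proof -
    have s0: "0 \<le> s" using T0(1) that by simp
    have "act a s" by (rule dem_act[OF s0 d]) (use nc s0 in blast)
    then have "comp s a \<in> A s" using act_comp[OF s0] by blast
    then show ?thesis unfolding P_def using comp_A_stable[OF T0 that] by simp
  qed
  define t where "t = T0 + \<bar>c e\<bar> + 1"
  have tT: "T0 \<le> t" unfolding t_def by simp
  have "t - T0 \<le> yt A P t" by (rule yt_lower[OF T0(1) tT]) (use PA in auto)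
  also have "\<dots> \<le> load e t" by (rule load_ge[OF eP])
  finally have "c e \<le> load e t" unfolding t_def by simp
  then have "e \<in> Ft t" using Ft_eq T0(1) tT by simp
  moreover have "Ft t = Ft T0" using T0(2) tT by blast
  ultimately have "e \<in> Ft T0" by simp
  then have cpq: "conn ends (Ft T0) p q" by (rule conn_step[of e _ ends p q, OF _ e(2)])
  have "conn ends (Ft T0) a p" using e(3) unfolding P_def comp_def by simp
  then have "conn ends (Ft T0) a q" using cpq by (rule conn_trans)
  then show False using e(4) unfolding P_def comp_def by simp
qed

lemma first_conn:
  assumes d: "{a, b} \<in> D"
  shows "\<exists>t\<ge>0. conn ends (Ft t) a b \<and> (\<forall>s. 0 \<le> s \<and> s < t \<longrightarrow> \<not> conn ends (Ft s) a b)"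
proof -
  define C where "C = {t. 0 \<le> t \<and> conn ends (Ft t) a b}"
  have Cne: "C \<noteq> {}" using eventually_conn[OF d] unfolding C_def by blast
  have bdd: "bdd_below C" unfolding C_def by (rule bdd_belowI[of _ 0]) simp
  define ts where "ts = Inf C"
  have ts0: "0 \<le> ts" unfolding ts_def C_def by (rule cInf_greatest) (use Cne C_def in auto)
  have below: "\<not> conn ends (Ft s) a b" if "0 \<le> s" "s < ts" for s
  proof
    assume "conn ends (Ft s) a b"
    then have "s \<in> C" unfolding C_def using that by simp
    then have "ts \<le> s" unfolding ts_def by (rule cInf_lower[OF _ bdd])
    then show False using that by simp
  qed
  obtain t0 where t0: "t0 \<in> C" and t0m: "\<forall>t. t \<in> C \<longrightarrow> card (Ft t0) \<le> card (Ft t)"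
    using ex_has_least_nat[of "\<lambda>t. t \<in> C" _ "\<lambda>t. card (Ft t)"] Cne by blast
  have t0sub: "Ft t0 \<subseteq> Ft t" if "t \<in> C" for t
  proof (cases "t0 \<le> t")
    case True then show ?thesis using Ft_mono t0 unfolding C_def by blast
  next
    case False
    then have "Ft t \<subseteq> Ft t0" using Ft_mono that unfolding C_def by auto
    moreover have "card (Ft t0) \<le> card (Ft t)" using t0m that by blast
    ultimately have "Ft t = Ft t0" using card_subset_eq[of "Ft t0" "Ft t"] card_mono[of "Ft t0" "Ft t"]
      by simp
    then show ?thesis by simp
  qed
  have "Ft t0 \<subseteq> Ft ts"
  proof
    fix e assume e: "e \<in> Ft t0"
    let ?L = "real (card {Q. e \<in> delta ends Q})"
    have "c e \<le> load e ts"
    proof (rule eps_bound[of ?L])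
      show "0 \<le> ?L" by simp
      fix d :: real assume dpos: "0 < d"
      have "Inf C < ts + d" using dpos unfolding ts_def by simp
      then obtain t where t: "t \<in> C" "t < ts + d" using cInf_lessD[OF Cne] by blast
      have t0': "0 \<le> t" using t unfolding C_def by simp
      have "e \<in> Ft t" using t0sub[OF t(1)] e by blast
      moreover have "Ft t \<subseteq> Ft (ts + d)" by (rule Ft_mono[OF t0']) (use t(2) in simp)
      ultimately have "e \<in> Ft (ts + d)" by blast
      then have "c e \<le> load e (ts + d)" using Ft_eq ts0 dpos by simp
      also have "\<dots> \<le> load e ts + ?L * (ts + d - ts)" by (rule load_lip) (use dpos in simp)
      finally show "c e \<le> load e ts + ?L * d" by simp
    qed
    then show "e \<in> Ft ts" using Ft_eq[OF ts0] by simp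
  qed
  moreover have "conn ends (Ft t0) a b" using t0 unfolding C_def by simp
  ultimately have "conn ends (Ft ts) a b" by (rule conn_mono)
  then show ?thesis using ts0 below by blast
qed

lemma eventually_inactive: "\<exists>s\<ge>0. \<not> act v s"
proof (rule ccontr)
  assume "\<not> (\<exists>s\<ge>0. \<not> act v s)"
  then have allact: "\<forall>s\<ge>0. act v s" by blast
  obtain T0 where T0: "0 \<le> T0" "\<forall>t\<ge>T0. Ft t = Ft T0" using stabilize by blast
  define P where "P = comp T0 v"
  have PA: "P \<in> A s" if "T0 \<le> s" for s
  proof -
    have s0: "0 \<le> s" using T0(1) that by simp
    have "comp s v \<in> A s" using act_comp[OF s0] allact s0 by blast
    then show ?thesis unfolding P_def using comp_A_stable[OF T0 that] by simp
  qed
  have Pc: "P \<in> comps ends (Ft T0)" unfolding P_def comp_def by (rule comp_in)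
  show False
  proof (cases "dem_active D P")
    case True
    then obtain x w where xw: "x \<in> P" "{x, w} \<in> D" "w \<notin> P" unfolding dem_active_def by blast
    obtain t where t: "0 \<le> t" "conn ends (Ft t) x w" using eventually_conn[OF xw(2)] by blast
    have "conn ends (Ft (max t T0)) x w" by (rule conn_Ft_mono[OF t(1) _ t(2)]) simp
    moreover have "Ft (max t T0) = Ft T0" by (rule T0(2)[rule_format]) simp
    ultimately have "conn ends (Ft T0) x w" by simp
    then have "w \<in> P" by (rule comp_closed[OF Pc xw(1)])
    then show False using xw(3) by simp
  next
    case False
    let ?f = "\<lambda>Q t. if dem_active D Q then eps * yt A Q t else - yt A Q t"
    have Qn: "\<forall>s. T0 \<le> s \<longrightarrow> Q \<notin> A s" if "Q \<in> {Q. Q \<subseteq> P} - {P}" for Q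
    proof (intro allI impI notI)
      fix s assume s: "T0 \<le> s" "Q \<in> A s"
      have s0: "0 \<le> s" using T0(1) s by simp
      have "Q \<in> comps ends (Ft s)" by (rule A_comps[OF s0 s(2)])
      moreover have "Ft s = Ft T0" using T0(2) s(1) by blast
      ultimately have Qc: "Q \<in> comps ends (Ft T0)" by simp
      then obtain u where "Q = {w. conn ends (Ft T0) u w}" by (auto simp: comps_def)
      then have uQ: "u \<in> Q" by simp
      then have "u \<in> P" using that by blast
      then have "Q = P" using comps_disj[OF Qc Pc uQ] by simp
      then show False using that by simp
    qed
    define K where "K = (\<Sum>Q\<in>{Q. Q \<subseteq> P} - {P}. ?f Q T0)"
    have bud: "budget eps D A P t = K - yt A P t" if "T0 \<le> t" for t
    proof -
      have "budget eps D A P t = ?f P t + (\<Sum>Q\<in>{Q. Q \<subseteq> P} - {P}. ?f Q t)"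
        unfolding budget_def by (rule sum.remove) auto
      also have "(\<Sum>Q\<in>{Q. Q \<subseteq> P} - {P}. ?f Q t) = K"
        unfolding K_def by (rule sum.cong[OF refl]) (simp add: yt_const[OF that Qn])
      finally show ?thesis using False by simp
    qed
    define t where "t = T0 + \<bar>K\<bar> + 1"
    have tT: "T0 \<le> t" unfolding t_def by simp
    have "t - T0 \<le> yt A P t" by (rule yt_lower[OF T0(1) tT]) (use PA in auto)
    then have "budget eps D A P t < 0" using bud[OF tT] unfolding t_def by simp
    moreover have "P \<in> A t" by (rule PA[OF tT])
    ultimately show False using A_eq[of t] T0(1) tT False by auto
  qed
qed

end

context runF begin

lemma tau_eq: "tau A v = Sup {t. 0 \<le> t \<and> (\<forall>s. 0 \<le> s \<and> s < t \<longrightarrow> act v s)}"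
  unfolding tau_def act_def ..

lemma X_bdd: "bdd_above {t. 0 \<le> t \<and> (\<forall>s. 0 \<le> s \<and> s < t \<longrightarrow> act v s)}"
proof -
  obtain s0 where s0: "0 \<le> s0" "\<not> act v s0" using eventually_inactive by blast
  show ?thesis
  proof (rule bdd_aboveI[of _ s0])
    fix t assume t: "t \<in> {t. 0 \<le> t \<and> (\<forall>s. 0 \<le> s \<and> s < t \<longrightarrow> act v s)}"
    show "t \<le> s0"
    proof (rule ccontr)
      assume "\<not> t \<le> s0"
      then have "s0 < t" by simp
      then show False using t s0 by blast
    qed
  qed
qed

lemma tau_ge: "0 \<le> t \<Longrightarrow> (\<forall>s. 0 \<le> s \<and> s < t \<longrightarrow> act v s) \<Longrightarrow> t \<le> tau A v"
  unfolding tau_eq by (rule cSup_upper[OF _ X_bdd]) simp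

lemma tau_act: assumes "0 \<le> s" "s < tau A v" shows "act v s"
proof -
  have ne: "{t. 0 \<le> t \<and> (\<forall>s. 0 \<le> s \<and> s < t \<longrightarrow> act v s)} \<noteq> {}" by auto
  obtain x where "x \<in> {t. 0 \<le> t \<and> (\<forall>s. 0 \<le> s \<and> s < t \<longrightarrow> act v s)}" "s < x"
    using less_cSupD[OF ne assms(2)[unfolded tau_eq]] by blast
  then show ?thesis using assms(1) by blast
qed

lemma tau_extend:
  assumes ta: "0 \<le> ta" and cvx: "conn ends (Ft ta) v x" and tax: "ta \<le> tau A x"
    and tab: "ta \<le> tb" and tbv: "tb \<le> tau A v"
  shows "tb \<le> tau A x"
proof (rule tau_ge)
  show "0 \<le> tb" using ta tab by simp
  show "\<forall>s. 0 \<le> s \<and> s < tb \<longrightarrow> act x s"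
  proof (intro allI impI)
    fix s assume s: "0 \<le> s \<and> s < tb"
    show "act x s"
    proof (cases "s < ta")
      case True
      then show ?thesis using tau_act[of s x] s tax by simp
    next
      case False
      then have tas: "ta \<le> s" by simp
      have "act v s" using tau_act[of s v] s tbv by simp
      then have cA: "comp s v \<in> A s" using act_comp s by blast
      have "conn ends (Ft s) v x" by (rule conn_Ft_mono[OF ta tas cvx])
      then have "x \<in> comp s v" unfolding comp_def by simp
      then show ?thesis using cA unfolding act_def by blast
    qed
  qed
qed

lemma actconn_iff:
  "actconn ends A Ft u v \<longleftrightarrow> (\<exists>t\<ge>0. conn ends (Ft t) u v \<and> t \<le> tau A u \<and> t \<le> tau A v)"
proof
  assume "actconn ends A Ft u v"
  then obtain t C where tc: "0 \<le> t" "C \<in> comps ends (Ft t)" "u \<in> C" "v \<in> C" "t \<le> tau A u" "t \<le> tau A v"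
    unfolding actconn_def by blast
  have "conn ends (Ft t) u v" by (rule in_comp_conn[OF tc(2,3,4)])
  then show "\<exists>t\<ge>0. conn ends (Ft t) u v \<and> t \<le> tau A u \<and> t \<le> tau A v"
    using tc by blast
next
  assume "\<exists>t\<ge>0. conn ends (Ft t) u v \<and> t \<le> tau A u \<and> t \<le> tau A v"
  then obtain t where t: "0 \<le> t" "conn ends (Ft t) u v" "t \<le> tau A u" "t \<le> tau A v" by blast
  have "{w. conn ends (Ft t) u w} \<in> comps ends (Ft t)" by (rule comp_in)
  moreover have "u \<in> {w. conn ends (Ft t) u w}" "v \<in> {w. conn ends (Ft t) u w}" using t by auto
  ultimately show "actconn ends A Ft u v" unfolding actconn_def using t by blast
qed

lemma actconn_sym: "actconn ends A Ft u v \<Longrightarrow> actconn ends A Ft v u"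
  unfolding actconn_def by blast

lemma actconn_trans:
  assumes "actconn ends A Ft u v" "actconn ends A Ft v w"
  shows "actconn ends A Ft u w"
proof -
  obtain t1 where t1: "0 \<le> t1" "conn ends (Ft t1) u v" "t1 \<le> tau A u" "t1 \<le> tau A v"
    using assms(1) actconn_iff by blast
  obtain t2 where t2: "0 \<le> t2" "conn ends (Ft t2) v w" "t2 \<le> tau A v" "t2 \<le> tau A w"
    using assms(2) actconn_iff by blast
  show ?thesis
  proof (cases "t1 \<le> t2")
    case True
    have "conn ends (Ft t2) u v" by (rule conn_Ft_mono[OF t1(1) True t1(2)])
    then have cuw: "conn ends (Ft t2) u w" using t2(2) by (rule conn_trans)
    have "t2 \<le> tau A u" by (rule tau_extend[OF t1(1) conn_sym[OF t1(2)] t1(3) True t2(3)])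
    then show ?thesis unfolding actconn_iff using cuw t2 by blast
  next
    case False
    then have le: "t2 \<le> t1" by simp
    have "conn ends (Ft t1) v w" by (rule conn_Ft_mono[OF t2(1) le t2(2)])
    then have cuw: "conn ends (Ft t1) u w" by (rule conn_trans[OF t1(2)])
    have "t1 \<le> tau A w" by (rule tau_extend[OF t2(1) t2(2) t2(4) le t1(4)])
    then show ?thesis unfolding actconn_iff using cuw t1 by blast
  qed
qed

lemma actconn_dem:
  assumes d: "{a, b} \<in> D"
  shows "actconn ends A Ft a b"
proof -
  obtain t where t: "0 \<le> t" "conn ends (Ft t) a b" "\<forall>s. 0 \<le> s \<and> s < t \<longrightarrow> \<not> conn ends (Ft s) a b"
    using first_conn[OF d] by blast
  have d': "{b, a} \<in> D" using d by (simp add: insert_commute)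
  have "t \<le> tau A a"
  proof (rule tau_ge[OF t(1)], intro allI impI)
    fix s assume s: "0 \<le> s \<and> s < t"
    then have "\<not> conn ends (Ft s) a b" using t(3) by blast
    then show "act a s" using dem_act[OF _ d] s by blast
  qed
  moreover have "t \<le> tau A b"
  proof (rule tau_ge[OF t(1)], intro allI impI)
    fix s assume s: "0 \<le> s \<and> s < t"
    then have "\<not> conn ends (Ft s) a b" using t(3) by blast
    then have "\<not> conn ends (Ft s) b a" using conn_sym[of ends "Ft s" b a] by blast
    then show "act b s" using dem_act[OF _ d'] s by blast
  qed
  ultimately show ?thesis unfolding actconn_iff using t by blast
qed

lemma tau_sep:
  assumes s: "0 \<le> s" "U \<in> A s" and a: "a \<in> U" "{a, b} \<in> D" "b \<notin> U"
  shows "s \<le> tau A a"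
proof (rule tau_ge[OF s(1)], intro allI impI)
  fix s' assume s': "0 \<le> s' \<and> s' < s"
  have Uc: "U \<in> comps ends (Ft s)" by (rule A_comps[OF s])
  have "\<not> conn ends (Ft s') a b"
  proof
    assume "conn ends (Ft s') a b"
    then have "conn ends (Ft s) a b" by (rule conn_Ft_mono[rotated 2]) (use s' in auto)
    then have "b \<in> U" by (rule comp_closed[OF Uc a(1)])
    then show False using a(3) by simp
  qed
  then show "act a s'" using dem_act[OF _ a(2)] s' by blast
qed

lemma actconn_sep:
  assumes s: "0 \<le> s" "U \<in> A s" and a1: "a1 \<in> U" "{a1, b1} \<in> D" "b1 \<notin> U"
    and a2: "a2 \<in> U" "{a2, b2} \<in> D" "b2 \<notin> U"
  shows "actconn ends A Ft a1 a2"
proof -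
  have "conn ends (Ft s) a1 a2" by (rule in_comp_conn[OF A_comps[OF s] a1(1) a2(1)])
  moreover have "s \<le> tau A a1" by (rule tau_sep[OF s a1])
  moreover have "s \<le> tau A a2" by (rule tau_sep[OF s a2])
  ultimately show ?thesis unfolding actconn_iff using s by blast
qed

end

lemma sep_pair:
  assumes "separates U d" "card d = 2"
  shows "\<exists>a b. d = {a, b} \<and> a \<in> U \<and> b \<notin> U"
proof -
  obtain a b where ab: "a \<in> d" "a \<in> U" "b \<in> d" "b \<notin> U" using assms(1) unfolding separates_def by blast
  have fin: "finite d" using assms(2) by (metis card.infinite zero_neq_numeral)
  have "{a, b} \<subseteq> d" using ab by blast
  moreover have "a \<noteq> b" using ab by blast
  then have "card {a, b} = 2" by simp
  ultimately have "{a, b} = d" using card_subset_eq[OF fin] assms(2) by metis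
  then show ?thesis using ab by blast
qed

lemma yfin_active:
  assumes "yfin A U \<noteq> 0"
  shows "\<exists>s\<ge>0. U \<in> A s"
proof (rule ccontr)
  assume "\<not> (\<exists>s\<ge>0. U \<in> A s)"
  then have "{0..} \<inter> {s. U \<in> A s} = {}" by auto
  then have "yfin A U = 0" unfolding yfin_def by simp
  then show False using assms by simp
qed

lemma (in runF) transfer:
  assumes I: "Inv ends D OPT FF"
    and Fs: "Fs \<in> FF" "connects ends Fs {a1, b1}" "connects ends Fs {a2, b2}"
    and s: "0 \<le> s" "U \<in> A s"
    and a1: "a1 \<in> U" "{a1, b1} \<in> D" "b1 \<notin> U"
    and a2: "a2 \<in> U" "{a2, b2} \<in> D" "b2 \<notin> U"
    and sat: "S1 \<in> canon_coll ends A Ft r FF" "{a1, b1} \<subseteq> S1"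
  shows "\<exists>S\<in>canon_coll ends A Ft r FF. {a2, b2} \<subseteq> S"
proof -
  obtain Fo1 T1 where F1: "Fo1 \<in> FF" "T1 \<in> fcomps ends Fo1" "S1 = Sset ends A Ft (r Fo1) T1"
    using sat(1) unfolding canon_coll_def by blast
  have a1S: "a1 \<in> T1" "actconn ends A Ft (r Fo1) a1" using sat(2) F1(3) unfolding Sset_def by auto
  have "T1 \<subseteq> fst Fo1" by (rule fcomp_props(2)[OF I F1(1,2)])
  then have a1F1: "a1 \<in> fst Fo1" using a1S by blast
  have a1Fs: "a1 \<in> fst Fs" using Fs(2) unfolding connects_def by simp
  have "Fo1 = Fs"
  proof (rule ccontr)
    assume "Fo1 \<noteq> Fs"
    then have "fst Fo1 \<inter> fst Fs = {}" using I F1(1) Fs(1) unfolding Inv_def by blast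
    then show False using a1F1 a1Fs by blast
  qed
  then have c2: "connects ends Fo1 {a2, b2}" using Fs(3) by simp
  have a2F: "a2 \<in> fst Fo1" "b2 \<in> fst Fo1" using c2 unfolding connects_def by auto
  have cab: "conn ends (snd Fo1) a2 b2" using c2 unfolding connects_def by auto
  define T2 where "T2 = {w\<in>fst Fo1. conn ends (snd Fo1) a2 w}"
  have T2c: "T2 \<in> fcomps ends Fo1" unfolding T2_def fcomps_def using a2F by blast
  have "actconn ends A Ft a1 a2" by (rule actconn_sep[OF s a1 a2])
  then have ra2: "actconn ends A Ft (r Fo1) a2" by (rule actconn_trans[OF a1S(2)])
  have rb2: "actconn ends A Ft (r Fo1) b2" by (rule actconn_trans[OF ra2 actconn_dem[OF a2(2)]])
  have sub: "{a2, b2} \<subseteq> Sset ends A Ft (r Fo1) T2"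
    unfolding Sset_def T2_def using a2F cab ra2 rb2 by auto
  then have "Sset ends A Ft (r Fo1) T2 \<in> canon_coll ends A Ft r FF"
    unfolding canon_coll_def using F1(1) T2c by blast
  then show ?thesis using sub by blast
qed

theorem lemma6p3:
  fixes ends :: "'e::finite \<Rightarrow> 'v::finite set"
    and c :: "'e \<Rightarrow> real"
    and D :: "'v set set"
    and eps :: real
    and A :: "real \<Rightarrow> 'v set set"
    and Ft :: "real \<Rightarrow> 'e set"
    and OPT :: "'e set"
    and Us :: "'v set list"
    and r :: "('v, 'e) forest \<Rightarrow> 'v"
  assumes edges: "\<forall>e. card (ends e) = 2"
    and costs: "\<forall>e. 0 \<le> c e"
    and pairs: "\<forall>d\<in>D. card d = 2"
    and eps: "0 \<le> eps"
    and run: "is_run ends c D eps A Ft"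
    and opt: "is_min_opt ends c D OPT"
    and Us: "distinct Us" "set Us = Usep D A"
    and root: "\<forall>Fo\<in>canon_forests ends D OPT Us.
                 r Fo \<in> fst Fo \<and> (\<forall>v\<in>fst Fo. tau A v \<le> tau A (r Fo))"
  shows "(\<forall>S\<in>canon_coll ends A Ft r (canon_forests ends D OPT Us). actconn_set ends A Ft S)
       \<and> (\<forall>Fo\<in>canon_forests ends D OPT Us. \<forall>T\<in>fcomps ends Fo.
            Sset ends A Ft (r Fo) T \<noteq> {} \<longrightarrow>
              (let S = Sset ends A Ft (r Fo) T; G = T_S ends Fo T S
               in S \<subseteq> fst G \<and> (\<forall>u\<in>S. \<forall>v\<in>S. conn ends (snd G) u v)))
       \<and> agreeable ends D A OPT (canon_coll ends A Ft r (canon_forests ends D OPT Us))"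
proof -
  interpret R: runF ends c D eps A Ft OPT by (rule runF.intro[OF edges run opt])
  define FF where "FF = canon_forests ends D OPT Us"
  have feas: "feasible ends D OPT" by (rule R.feas)
  have IF: "Inv ends D OPT FF" unfolding FF_def canon_forests_def
    by (rule Inv_fold[OF edges Inv_init[OF feas]])
  have P1: "\<forall>S\<in>canon_coll ends A Ft r FF. actconn_set ends A Ft S"
    unfolding canon_coll_def Sset_def actconn_set_def by blast
  have P2: "\<forall>Fo\<in>FF. \<forall>T\<in>fcomps ends Fo.
            Sset ends A Ft (r Fo) T \<noteq> {} \<longrightarrow>
              (let S = Sset ends A Ft (r Fo) T; G = T_S ends Fo T S
               in S \<subseteq> fst G \<and> (\<forall>u\<in>S. \<forall>v\<in>S. conn ends (snd G) u v))"
  proof (intro ballI impI)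
    fix Fo T assume Fo: "Fo \<in> FF" and T: "T \<in> fcomps ends Fo"
    define S where "S = Sset ends A Ft (r Fo) T"
    have ST: "S \<subseteq> T" unfolding S_def Sset_def by blast
    have Tne: "T \<noteq> {}" by (rule fcomp_props(3)[OF IF Fo T])
    have Tc: "\<forall>u\<in>T. \<forall>v\<in>T. conn ends {e\<in>snd Fo. ends e \<subseteq> T} u v" by (rule fcomp_props(4)[OF IF Fo T])
    have "\<forall>e\<in>{e\<in>snd Fo. ends e \<subseteq> T}. ends e \<subseteq> T" by blast
    from spanning_tree[OF this Tc Tne] obtain F' where
      F': "F' \<subseteq> {e\<in>snd Fo. ends e \<subseteq> T}" "is_tree ends (T, F')" by blast
    have "is_subtree_conn ends (T, {e\<in>snd Fo. ends e \<subseteq> T}) S (T, F')"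
      unfolding is_subtree_conn_def using F' ST by simp
    from T_S_good[OF this]
    show "let S = Sset ends A Ft (r Fo) T; G = T_S ends Fo T S
               in S \<subseteq> fst G \<and> (\<forall>u\<in>S. \<forall>v\<in>S. conn ends (snd G) u v)"
      unfolding S_def Let_def .
  qed
  have A1: "\<forall>S\<in>canon_coll ends A Ft r FF. \<exists>K\<in>comps ends OPT. S \<subseteq> K"
  proof
    fix S assume "S \<in> canon_coll ends A Ft r FF"
    then obtain Fo T where F: "Fo \<in> FF" "T \<in> fcomps ends Fo" "S = Sset ends A Ft (r Fo) T"
      unfolding canon_coll_def by blast
    have "T \<in> comps ends OPT" by (rule fcomp_props(1)[OF IF F(1,2)])
    moreover have "S \<subseteq> T" using F(3) unfolding Sset_def by blast
    ultimately show "\<exists>K\<in>comps ends OPT. S \<subseteq> K" by blast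
  qed
  have A2: "\<forall>K\<in>comps ends OPT. \<forall>S1\<in>canon_coll ends A Ft r FF. \<forall>S2\<in>canon_coll ends A Ft r FF.
              S1 \<subseteq> K \<longrightarrow> S2 \<subseteq> K \<longrightarrow> S1 = S2"
  proof (intro ballI impI)
    fix K S1 S2 assume K: "K \<in> comps ends OPT" and S: "S1 \<in> canon_coll ends A Ft r FF"
      "S2 \<in> canon_coll ends A Ft r FF" "S1 \<subseteq> K" "S2 \<subseteq> K"
    obtain Fo1 T1 where F1: "Fo1 \<in> FF" "T1 \<in> fcomps ends Fo1" "S1 = Sset ends A Ft (r Fo1) T1" "S1 \<noteq> {}"
      using S(1) unfolding canon_coll_def by blast
    obtain Fo2 T2 where F2: "Fo2 \<in> FF" "T2 \<in> fcomps ends Fo2" "S2 = Sset ends A Ft (r Fo2) T2" "S2 \<noteq> {}"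
      using S(2) unfolding canon_coll_def by blast
    have ST1: "S1 \<subseteq> T1" using F1(3) unfolding Sset_def by blast
    have ST2: "S2 \<subseteq> T2" using F2(3) unfolding Sset_def by blast
    obtain x1 where x1: "x1 \<in> S1" using F1(4) by blast
    obtain x2 where x2: "x2 \<in> S2" using F2(4) by blast
    have "T1 = K" by (rule comps_disj[OF fcomp_props(1)[OF IF F1(1,2)] K, of x1]) (use x1 ST1 S(3) in auto)
    moreover have "T2 = K" by (rule comps_disj[OF fcomp_props(1)[OF IF F2(1,2)] K, of x2]) (use x2 ST2 S(4) in auto)
    ultimately have TT: "T1 = K" "T2 = K" by auto
    have "T1 \<subseteq> fst Fo1" by (rule fcomp_props(2)[OF IF F1(1,2)])
    moreover have "T2 \<subseteq> fst Fo2" by (rule fcomp_props(2)[OF IF F2(1,2)])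
    ultimately have "x1 \<in> fst Fo1" "x1 \<in> fst Fo2" using TT x1 ST1 S(3) by auto
    then have "Fo1 = Fo2" using IF F1(1) F2(1) unfolding Inv_def by blast
    then show "S1 = S2" using F1(3) F2(3) TT by simp
  qed
  have A3: "\<forall>d1\<in>D. \<forall>d2\<in>D. (\<exists>U. yfin A U \<noteq> 0 \<and> separates U d1 \<and> separates U d2)
        \<longrightarrow> ((\<exists>S\<in>canon_coll ends A Ft r FF. d1 \<subseteq> S) \<longleftrightarrow> (\<exists>S\<in>canon_coll ends A Ft r FF. d2 \<subseteq> S))"
  proof (intro ballI impI)
    fix d1 d2 assume d: "d1 \<in> D" "d2 \<in> D" and "\<exists>U. yfin A U \<noteq> 0 \<and> separates U d1 \<and> separates U d2"
    then obtain U where U: "yfin A U \<noteq> 0" "separates U d1" "separates U d2" by blast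
    obtain s where s: "0 \<le> s" "U \<in> A s" using yfin_active[OF U(1)] by blast
    obtain a1 b1 where ab1: "d1 = {a1, b1}" "a1 \<in> U" "b1 \<notin> U"
      using sep_pair[OF U(2)] pairs d(1) by blast
    obtain a2 b2 where ab2: "d2 = {a2, b2}" "a2 \<in> U" "b2 \<notin> U"
      using sep_pair[OF U(3)] pairs d(2) by blast
    have "U \<in> Usep D A" unfolding Usep_def using U d by blast
    then have "U \<in> set Us" using Us(2) by simp
    then obtain xs ys where xs: "Us = xs @ U # ys" by (metis split_list)
    define F0 where "F0 = fold (merge_step ends D) xs (init_forests ends OPT)"
    have I0: "Inv ends D OPT F0" unfolding F0_def by (rule Inv_fold[OF edges Inv_init[OF feas]])
    obtain Fo where Fo: "Fo \<in> merge_step ends D U F0" "connects ends Fo d1" "connects ends Fo d2"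
      using both_merge[OF I0 d U(2,3)] by blast
    have FFeq: "FF = fold (merge_step ends D) ys (merge_step ends D U F0)"
      unfolding FF_def canon_forests_def F0_def xs by simp
    obtain Fs where Fs: "Fs \<in> FF" "fst Fo \<subseteq> fst Fs" "snd Fo \<subseteq> snd Fs"
      using fold_sup[OF Fo(1), of ends D ys] unfolding FFeq by blast
    have c1: "connects ends Fs {a1, b1}" using connects_mono[OF Fo(2) Fs(2,3)] ab1 by simp
    have c2: "connects ends Fs {a2, b2}" using connects_mono[OF Fo(3) Fs(2,3)] ab2 by simp
    have D1: "{a1, b1} \<in> D" "{a2, b2} \<in> D" using d ab1 ab2 by auto
    show "(\<exists>S\<in>canon_coll ends A Ft r FF. d1 \<subseteq> S) \<longleftrightarrow> (\<exists>S\<in>canon_coll ends A Ft r FF. d2 \<subseteq> S)"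
    proof
      assume "\<exists>S\<in>canon_coll ends A Ft r FF. d1 \<subseteq> S"
      then obtain S1 where "S1 \<in> canon_coll ends A Ft r FF" "{a1, b1} \<subseteq> S1" using ab1 by blast
      from R.transfer[OF IF Fs(1) c1 c2 s ab1(2) D1(1) ab1(3) ab2(2) D1(2) ab2(3) this]
      show "\<exists>S\<in>canon_coll ends A Ft r FF. d2 \<subseteq> S" using ab2 by simp
    next
      assume "\<exists>S\<in>canon_coll ends A Ft r FF. d2 \<subseteq> S"
      then obtain S2 where "S2 \<in> canon_coll ends A Ft r FF" "{a2, b2} \<subseteq> S2" using ab2 by blast
      from R.transfer[OF IF Fs(1) c2 c1 s ab2(2) D1(2) ab2(3) ab1(2) D1(1) ab1(3) this]
      show "\<exists>S\<in>canon_coll ends A Ft r FF. d1 \<subseteq> S" using ab1 by simp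
    qed
  qed
  have "agreeable ends D A OPT (canon_coll ends A Ft r FF)"
    unfolding agreeable_def using A1 A2 A3 by blast
  then show ?thesis using P1 P2 unfolding FF_def by blast
qed

end
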